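(* Let $q_0>0$, $\alpha\in\mathbb{R}$, $\theta_+\in(0,\pi)\setminus\{\pi/2\}$, and set $\xi(x,t)=q_0x\sin\theta_++\tfrac12\alpha t\tan\theta_+$. Then $q(x,t)=q_0e^{i\alpha t}\cos\!\big(\theta_+-i\xi(x,t)\big)\,\mathrm{sech}\,\xi(x,t)=q_0e^{i\alpha t}\big(\cos\theta_++i\sin\theta_+\tanh\xi\big)$ and $s(x,t)=\tfrac12 q_0\alpha\sin\theta_+\tan\theta_+\,\mathrm{sech}^2\xi(x,t)$ are smooth (nonsingular) on $\mathbb{R}^2$ and satisfy the nonlocal Sinh-Gordon system $q_{xt}(x,t)+2s(x,t)q(x,t)=0$, $s_x(x,t)=-\partial_t\big(q(x,t)q(-x,-t)\big)$, with $s(-x,-t)=s(x,t)$, $s(x,t)\to0$ as $|x|\to\infty$, and $q(x,t)\to q_0e^{i(\alpha t\pm\theta_+)}$ as $x\to\pm\infty$. *)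

theory Defs
  imports "HOL-Analysis.Analysis"
begin

definition sech :: "real \<Rightarrow> real" where
  "sech y = 1 / cosh y"

definition xi_fn :: "real \<Rightarrow> real \<Rightarrow> real \<Rightarrow> real \<Rightarrow> real \<Rightarrow> real" where
  "xi_fn q0 \<alpha> \<theta> x t = q0 * x * sin \<theta> + (1/2) * \<alpha> * t * tan \<theta>"

definition q_fn :: "real \<Rightarrow> real \<Rightarrow> real \<Rightarrow> real \<Rightarrow> real \<Rightarrow> complex" where
  "q_fn q0 \<alpha> \<theta> x t =
     complex_of_real q0 * exp (\<i> * complex_of_real (\<alpha> * t))
     * cos (complex_of_real \<theta> - \<i> * complex_of_real (xi_fn q0 \<alpha> \<theta> x t))
     * complex_of_real (sech (xi_fn q0 \<alpha> \<theta> x t))"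

definition s_fn :: "real \<Rightarrow> real \<Rightarrow> real \<Rightarrow> real \<Rightarrow> real \<Rightarrow> real" where
  "s_fn q0 \<alpha> \<theta> x t = (1/2) * q0 * \<alpha> * sin \<theta> * tan \<theta> * (sech (xi_fn q0 \<alpha> \<theta> x t))^2"

definition pdx :: "(real \<Rightarrow> real \<Rightarrow> 'a::real_normed_vector) \<Rightarrow> real \<Rightarrow> real \<Rightarrow> 'a" where
  "pdx f x t = vector_derivative (\<lambda>y. f y t) (at x)"

definition pdt :: "(real \<Rightarrow> real \<Rightarrow> 'a::real_normed_vector) \<Rightarrow> real \<Rightarrow> real \<Rightarrow> 'a" where
  "pdt f x t = vector_derivative (\<lambda>\<tau>. f x \<tau>) (at t)"

text \<open>Iterated partial derivatives: True = d/dx, False = d/dt (innermost last in list).\<close>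
fun pderivs :: "bool list \<Rightarrow> (real \<Rightarrow> real \<Rightarrow> 'a::real_normed_vector) \<Rightarrow> real \<Rightarrow> real \<Rightarrow> 'a" where
  "pderivs [] f = f"
| "pderivs (b # bs) f = (if b then pdx (pderivs bs f) else pdt (pderivs bs f))"

definition smooth2 :: "(real \<Rightarrow> real \<Rightarrow> 'a::real_normed_vector) \<Rightarrow> bool" where
  "smooth2 f \<longleftrightarrow> (\<forall>bs.
      continuous_on UNIV (\<lambda>(x, t). pderivs bs f x t) \<and>
      (\<forall>x t. (\<lambda>y. pderivs bs f y t) differentiable (at x) \<and>
             (\<lambda>\<tau>. pderivs bs f x \<tau>) differentiable (at t)))"

end

theory Submission
  imports Defs "HOL-Computational_Algebra.Polynomial"
begin

definition G :: "'a::{banach,real_normed_field} \<Rightarrow> 'a poly \<Rightarrow> real \<Rightarrow> real \<Rightarrow> real \<Rightarrow> real \<Rightarrow> 'a" where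
  "G c p a b x t = exp (c * of_real t) * poly p (of_real (tanh (a*x + b*t)))"

lemma tanh_aff_deriv:
  "((\<lambda>y. tanh (a*y + b)) has_real_derivative (a * (1 - tanh (a*x+b)^2))) (at x)"
  by (rule derivative_eq_intros refl | simp)+

lemma G_dx:
  "((\<lambda>y. G c p a b y t) has_vector_derivative
     G c (pderiv p * [:of_real a, 0, - of_real a:]) a b x t) (at x)"
proof -
  let ?T = "tanh (a*x + b*t)"
  have h1: "((\<lambda>y. of_real (tanh (a*y + b*t)) :: 'a) has_vector_derivative of_real (a * (1 - ?T^2))) (at x)"
    by (rule has_vector_derivative_of_real[OF tanh_aff_deriv])
  have h2: "((poly p \<circ> (\<lambda>y. of_real (tanh (a*y + b*t)) :: 'a)) has_vector_derivative
     (of_real (a * (1 - ?T^2)) * poly (pderiv p) (of_real ?T))) (at x)"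
    by (rule field_vector_diff_chain_at[OF h1]) simp
  have h3: "((\<lambda>y. exp (c * of_real t) * (poly p \<circ> (\<lambda>y. of_real (tanh (a*y + b*t)) :: 'a)) y) has_vector_derivative
     exp (c * of_real t) * (of_real (a * (1 - ?T^2)) * poly (pderiv p) (of_real ?T))) (at x)"
    by (rule has_vector_derivative_mult_right[OF h2])
  show ?thesis using h3 unfolding G_def
    by (simp add: o_def algebra_simps power2_eq_square)
qed

lemma G_dt:
  "((\<lambda>\<tau>. G c p a b x \<tau>) has_vector_derivative
     G c (smult c p + pderiv p * [:of_real b, 0, - of_real b:]) a b x t) (at t)"
proof -
  let ?T = "tanh (a*x + b*t)"
  have d: "((\<lambda>y. tanh (b*y + a*x)) has_real_derivative (b * (1 - tanh (b*t+a*x)^2))) (at t)"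
    by (rule tanh_aff_deriv)
  have h1: "((\<lambda>y. of_real (tanh (a*x + b*y)) :: 'a) has_vector_derivative of_real (b * (1 - ?T^2))) (at t)"
    using has_vector_derivative_of_real[OF d] by (simp add: add.commute)
  have h2: "((poly p \<circ> (\<lambda>y. of_real (tanh (a*x + b*y)) :: 'a)) has_vector_derivative
     (of_real (b * (1 - ?T^2)) * poly (pderiv p) (of_real ?T))) (at t)"
    by (rule field_vector_diff_chain_at[OF h1]) simp
  have e: "((\<lambda>z. exp (c * z)) has_field_derivative (c * exp (c * of_real t))) (at (of_real t))"
    by (auto intro!: derivative_eq_intros)
  have h0: "((\<lambda>y. exp (c * of_real y)) has_vector_derivative (c * exp (c * of_real t))) (at t)"
    by (rule has_vector_derivative_real_field[OF e])
  note h3 = has_vector_derivative_mult[OF h0 h2]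
  show ?thesis using h3 unfolding G_def
    by (simp add: o_def algebra_simps power2_eq_square)
qed

lemma pderivs_G: "\<exists>p'. pderivs bs (G c p a b) = G c p' a b"
proof (induction bs)
  case Nil then show ?case by auto
next
  case (Cons bb bs)
  then obtain p' where p': "pderivs bs (G c p a b) = G c p' a b" by blast
  show ?case
  proof (cases bb)
    case True
    have "pdx (G c p' a b) = G c (pderiv p' * [:of_real a, 0, - of_real a:]) a b"
      by (intro ext) (simp add: pdx_def vector_derivative_at[OF G_dx])
    then show ?thesis using True p' by auto
  next
    case False
    have "pdt (G c p' a b) = G c (smult c p' + pderiv p' * [:of_real b, 0, - of_real b:]) a b"
      by (intro ext) (simp add: pdt_def vector_derivative_at[OF G_dt])
    then show ?thesis using False p' by auto
  qed
qed

lemma smooth2_G: "smooth2 (G c p a b)"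
  unfolding smooth2_def
proof (intro allI conjI)
  fix bs x t
  obtain p' where p': "pderivs bs (G c p a b) = G c p' a b" using pderivs_G by blast
  show "continuous_on UNIV (\<lambda>(x, t). pderivs bs (G c p a b) x t)"
    unfolding p' G_def case_prod_unfold by (intro continuous_intros) auto
  show "(\<lambda>y. pderivs bs (G c p a b) y t) differentiable at x"
    unfolding p' using G_dx by (rule differentiableI_vector)
  show "(\<lambda>\<tau>. pderivs bs (G c p a b) x \<tau>) differentiable at t"
    unfolding p' using G_dt by (rule differentiableI_vector)
qed

lemma cos_ix: "cos (\<i> * complex_of_real y) = complex_of_real (cosh y)"
  by (simp add: cos_i_times cosh_def exp_of_real exp_minus)
lemma sin_ix: "sin (\<i> * complex_of_real y) = \<i> * complex_of_real (sinh y)"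
  by (simp add: sin_i_times sinh_def exp_of_real exp_minus)

lemma q_alt: "q_fn q0 \<alpha> \<theta> x t = complex_of_real q0 * exp (\<i> * complex_of_real (\<alpha> * t))
              * (complex_of_real (cos \<theta>)
                 + \<i> * complex_of_real (sin \<theta> * tanh (xi_fn q0 \<alpha> \<theta> x t)))"
proof -
  define y where "y = xi_fn q0 \<alpha> \<theta> x t"
  have c: "cosh y \<noteq> 0" by (simp add: order.strict_iff_not[symmetric])
  have "cos (complex_of_real \<theta> - \<i> * complex_of_real y) * complex_of_real (sech y)
     = complex_of_real (cos \<theta>) + \<i> * complex_of_real (sin \<theta> * tanh y)"
    using c by (simp add: cos_diff cos_ix sin_ix cos_of_real sin_of_real sech_def tanh_def field_simps)
  then show ?thesis unfolding q_fn_def y_def[symmetric] by (simp add: mult.assoc)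
qed

lemma sech_sq: "sech y ^ 2 = 1 - tanh y ^ 2"
proof -
  have "cosh y \<noteq> 0" by (metis cosh_real_pos less_irrefl)
  moreover have "sinh y ^ 2 + 1 \<noteq> 0" by (metis add_nonneg_pos zero_le_power2 zero_less_one less_irrefl)
  ultimately show ?thesis using cosh_square_eq[of y]
    by (simp add: sech_def tanh_def power_divide divide_simps)
qed

lemma xi_alt: "xi_fn q0 \<alpha> \<theta> x t = (q0 * sin \<theta>) * x + (\<alpha> * tan \<theta> / 2) * t"
  by (simp add: xi_fn_def algebra_simps)

lemma qG: "q_fn q0 \<alpha> \<theta> = G (\<i> * of_real \<alpha>)
   [:complex_of_real (q0 * cos \<theta>), \<i> * complex_of_real (q0 * sin \<theta>):] (q0 * sin \<theta>) (\<alpha> * tan \<theta> / 2)"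
  unfolding q_alt[abs_def] G_def[abs_def] xi_alt by (simp add: algebra_simps)

lemma sG: "s_fn q0 \<alpha> \<theta> = G 0
   [:(1/2) * q0 * \<alpha> * sin \<theta> * tan \<theta>, 0, - ((1/2) * q0 * \<alpha> * sin \<theta> * tan \<theta>):] (q0 * sin \<theta>) (\<alpha> * tan \<theta> / 2)"
  unfolding s_fn_def[abs_def] G_def[abs_def] xi_alt sech_sq by (simp add: algebra_simps power2_eq_square)

lemma prodG: "(\<lambda>x' t'. q_fn q0 \<alpha> \<theta> x' t' * q_fn q0 \<alpha> \<theta> (-x') (-t')) = G 0
   [:complex_of_real (q0^2 * cos \<theta>^2), 0, complex_of_real (q0^2 * sin \<theta>^2):] (q0 * sin \<theta>) (\<alpha> * tan \<theta> / 2)"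
proof (intro ext)
  fix x t
  have "xi_fn q0 \<alpha> \<theta> (-x) (-t) = - xi_fn q0 \<alpha> \<theta> x t" by (simp add: xi_fn_def)
  moreover have "exp (\<i> * complex_of_real (\<alpha> * t)) * exp (\<i> * complex_of_real (\<alpha> * -t)) = 1"
    using exp_minus_inverse[of "\<i> * complex_of_real (\<alpha> * t)"] by simp
  ultimately show "q_fn q0 \<alpha> \<theta> x t * q_fn q0 \<alpha> \<theta> (-x) (-t) = G 0
   [:complex_of_real (q0^2 * cos \<theta>^2), 0, complex_of_real (q0^2 * sin \<theta>^2):] (q0 * sin \<theta>) (\<alpha> * tan \<theta> / 2) x t"
    unfolding q_alt G_def
    apply (simp add: algebra_simps power2_eq_square)
    apply (simp add: xi_fn_def algebra_simps)
    done
qed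

lemma pdx_G: "pdx (G c p a b) = G c (pderiv p * [:of_real a, 0, - of_real a:]) a b"
  by (intro ext) (simp add: pdx_def vector_derivative_at[OF G_dx])
lemma pdt_G: "pdt (G c p a b) = G c (smult c p + pderiv p * [:of_real b, 0, - of_real b:]) a b"
  by (intro ext) (simp add: pdt_def vector_derivative_at[OF G_dt])

lemma cos_ne: assumes "0 < \<theta>" and "\<theta> < pi" and "\<theta> \<noteq> pi / 2" shows "cos \<theta> \<noteq> 0"
  using assms by (smt (verit) cos_gt_zero cos_inj_pi cos_pi_half pi_half_gt_zero)

lemma pde1:
  assumes c: "cos \<theta> \<noteq> 0"
  shows "pdt (pdx (q_fn q0 \<alpha> \<theta>)) x t + 2 * complex_of_real (s_fn q0 \<alpha> \<theta> x t) * q_fn q0 \<alpha> \<theta> x t = 0"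
  unfolding qG sG pdx_G pdt_G
  unfolding G_def
  using c apply (simp add: pderiv_pCons tan_def power2_eq_square field_simps)
  done

lemma pde2:
  assumes c: "cos \<theta> \<noteq> 0"
  shows "complex_of_real (pdx (s_fn q0 \<alpha> \<theta>) x t) = - pdt (\<lambda>x' t'. q_fn q0 \<alpha> \<theta> x' t' * q_fn q0 \<alpha> \<theta> (-x') (-t')) x t"
  unfolding prodG sG pdx_G pdt_G
  unfolding G_def
  using c apply (simp add: pderiv_pCons tan_def power2_eq_square field_simps)
  done

lemma s_sym: "s_fn q0 \<alpha> \<theta> (-x) (-t) = s_fn q0 \<alpha> \<theta> x t"
proof -
  have "xi_fn q0 \<alpha> \<theta> (-x) (-t) = - xi_fn q0 \<alpha> \<theta> x t" by (simp add: xi_fn_def)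
  then show ?thesis by (simp add: s_fn_def sech_def)
qed

lemma lin_top: "a > 0 \<Longrightarrow> filterlim (\<lambda>x::real. a*x + c) at_top at_top"
  unfolding filterlim_at_top eventually_at_top_linorder
proof (intro allI exI allI impI)
  fix Z x assume "a > 0" "(Z - c)/a \<le> x"
  then show "Z \<le> a*x + c" by (simp add: field_simps)
qed
lemma lin_bot: "a > 0 \<Longrightarrow> filterlim (\<lambda>x::real. a*x + c) at_bot at_bot"
  unfolding filterlim_at_bot eventually_at_bot_linorder
proof (intro allI exI allI impI)
  fix Z x assume "a > 0" "x \<le> (Z - c)/a"
  then show "a*x + c \<le> Z" by (simp add: field_simps)
qed

lemma tanh_top: "a > 0 \<Longrightarrow> ((\<lambda>x::real. tanh (a*x + c)) \<longlongrightarrow> 1) at_top"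
  using filterlim_compose[OF tanh_real_at_top lin_top] by blast
lemma tanh_bot: "a > 0 \<Longrightarrow> ((\<lambda>x::real. tanh (a*x + c)) \<longlongrightarrow> -1) at_bot"
  using filterlim_compose[OF tanh_real_at_bot lin_bot] by blast

lemma s_lim:
  assumes "a > 0"
  shows "((\<lambda>x. G (0::real) [:k, 0, -k:] a b x t) \<longlongrightarrow> 0) at_infinity"
proof -
  have 1: "((\<lambda>x. G (0::real) [:k, 0, -k:] a b x t) \<longlongrightarrow> 0) at_top"
    unfolding G_def using tendsto_poly[OF tendsto_of_real[OF tanh_top[OF assms, of "b*t"]], of "[:k, 0, -k:]"]
    by simp
  have 2: "((\<lambda>x. G (0::real) [:k, 0, -k:] a b x t) \<longlongrightarrow> 0) at_bot"
    unfolding G_def using tendsto_poly[OF tendsto_of_real[OF tanh_bot[OF assms, of "b*t"]], of "[:k, 0, -k:]"]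
    by simp
  show ?thesis unfolding at_infinity_eq_at_top_bot using 1 2 by (rule filterlim_sup)
qed

lemma eul: "exp (\<i> * complex_of_real y) = complex_of_real (cos y) + \<i> * complex_of_real (sin y)"
  by (simp add: cis_conv_exp[symmetric] cis.code complex_eq_iff)
lemma eul': "exp (- (\<i> * complex_of_real y)) = complex_of_real (cos y) - \<i> * complex_of_real (sin y)"
  using eul[of "-y"] by simp
theorem mainTheorem9:
  fixes q0 \<alpha> \<theta> :: real
  assumes "q0 > 0" and "0 < \<theta>" and "\<theta> < pi" and "\<theta> \<noteq> pi / 2"
  defines "q \<equiv> q_fn q0 \<alpha> \<theta>" and "s \<equiv> s_fn q0 \<alpha> \<theta>"
  shows "(\<forall>x t. q x t = complex_of_real q0 * exp (\<i> * complex_of_real (\<alpha> * t))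
              * (complex_of_real (cos \<theta>)
                 + \<i> * complex_of_real (sin \<theta> * tanh (xi_fn q0 \<alpha> \<theta> x t))))
    \<and> smooth2 q \<and> smooth2 s
    \<and> (\<forall>x t. pdt (pdx q) x t + 2 * complex_of_real (s x t) * q x t = 0)
    \<and> (\<forall>x t. complex_of_real (pdx s x t) = - pdt (\<lambda>x' t'. q x' t' * q (-x') (-t')) x t)
    \<and> (\<forall>x t. s (-x) (-t) = s x t)
    \<and> (\<forall>t. ((\<lambda>x. s x t) \<longlongrightarrow> 0) at_infinity)
    \<and> (\<forall>t. ((\<lambda>x. q x t) \<longlongrightarrow> complex_of_real q0 * exp (\<i> * complex_of_real (\<alpha> * t + \<theta>))) at_top)
    \<and> (\<forall>t. ((\<lambda>x. q x t) \<longlongrightarrow> complex_of_real q0 * exp (\<i> * complex_of_real (\<alpha> * t - \<theta>))) at_bot)"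
  proof -
  have c: "cos \<theta> \<noteq> 0" using assms(2-4) by (rule cos_ne)
  have sp: "sin \<theta> > 0" using assms(2,3) by (rule sin_gt_zero)
  have a: "q0 * sin \<theta> > 0" using assms(1) sp by simp
  have lq: "((\<lambda>x. q x t) \<longlongrightarrow> complex_of_real q0 * exp (\<i> * complex_of_real (\<alpha> * t + \<sigma> * \<theta>)))
        (if \<sigma> = 1 then at_top else at_bot)" if "\<sigma> = 1 \<or> \<sigma> = -1" for t \<sigma>
  proof -
    have T: "((\<lambda>x. tanh (q0 * sin \<theta> * x + \<alpha> * tan \<theta> / 2 * t)) \<longlongrightarrow> \<sigma>) (if \<sigma> = 1 then at_top else at_bot)"
      using that tanh_top[OF a] tanh_bot[OF a] by auto
    have "((\<lambda>x. q x t) \<longlongrightarrow> exp (\<i> * of_real \<alpha> * of_real t) *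
       poly [:complex_of_real (q0 * cos \<theta>), \<i> * complex_of_real (q0 * sin \<theta>):] (of_real \<sigma>))
        (if \<sigma> = 1 then at_top else at_bot)"
      unfolding q_def qG G_def by (intro tendsto_intros T)
    moreover have "exp (\<i> * of_real \<alpha> * of_real t) *
       poly [:complex_of_real (q0 * cos \<theta>), \<i> * complex_of_real (q0 * sin \<theta>):] (of_real \<sigma>)
       = complex_of_real q0 * exp (\<i> * complex_of_real (\<alpha> * t + \<sigma> * \<theta>))"
      using that by (auto simp: distrib_left exp_add eul eul' algebra_simps)
    ultimately show ?thesis by simp
  qed
  show ?thesis
    unfolding q_def s_def
    apply (intro conjI allI)
    using q_alt apply blast
    apply (simp add: qG smooth2_G)
    apply (simp add: sG smooth2_G)
    using pde1[OF c] apply blast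
    using pde2[OF c] apply blast
    using s_sym apply blast
    apply (simp add: sG s_lim[OF a])
    using lq[of 1] apply (simp add: q_def)
    using lq[of "-1"] apply (simp add: q_def)
    done
qed

end
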